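(* Let $S$ be a Stone space with $|S|\ge 3$ and $I$ a set of isolated points of $S$. Then $Q_6(I,S)=(S\cup\zeta(S);\tau,\le,\zeta)$ is a $pm$-space of height $1$.
   Context: A $pm$-space is $(P;\tau,\le,\zeta)$ where $(P;\tau,\le)$ is a Priestley space (compact, and whenever $y\not\le x$ there is a clopen decreasing set containing $x$ but not $y$), $[X)$ is clopen for every clopen decreasing $X\subseteq P$, and $\zeta$ is a continuous order-reversing involution. $Q_6(I,S)$ is $S\cup\zeta(S)$ where $\zeta(S)$ is a disjoint homeomorphic copy of $S$, $\tau$ is the disjoint union topology, $\zeta$ interchanges each $s\in S$ with its copy $\zeta(s)$, and $\le$ is the partial order whose only strict comparabilities are: for $x,y\in S$, $x<\zeta(y)$ iff ($x\ne y$ or $x\notin I$). *)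

theory Defs
  imports "HOL-Analysis.Analysis"
begin

definition stone_space :: "'a topology \<Rightarrow> bool" where
  "stone_space X \<longleftrightarrow> compact_space X \<and> Hausdorff_space X \<and>
     (\<forall>x\<in>topspace X. connected_component_of_set X x = {x})"

definition partial_order_on_set :: "'a set \<Rightarrow> ('a \<Rightarrow> 'a \<Rightarrow> bool) \<Rightarrow> bool" where
  "partial_order_on_set P le \<longleftrightarrow>
     (\<forall>x\<in>P. le x x) \<and>
     (\<forall>x\<in>P. \<forall>y\<in>P. le x y \<and> le y x \<longrightarrow> x = y) \<and>
     (\<forall>x\<in>P. \<forall>y\<in>P. \<forall>z\<in>P. le x y \<and> le y z \<longrightarrow> le x z)"

definition decreasing_set :: "'a set \<Rightarrow> ('a \<Rightarrow> 'a \<Rightarrow> bool) \<Rightarrow> 'a set \<Rightarrow> bool" where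
  "decreasing_set P le U \<longleftrightarrow> U \<subseteq> P \<and> (\<forall>a\<in>U. \<forall>b\<in>P. le b a \<longrightarrow> b \<in> U)"

definition up_closure :: "'a set \<Rightarrow> ('a \<Rightarrow> 'a \<Rightarrow> bool) \<Rightarrow> 'a set \<Rightarrow> 'a set" where
  "up_closure P le X = {y\<in>P. \<exists>x\<in>X. le x y}"

definition priestley_space :: "'a topology \<Rightarrow> ('a \<Rightarrow> 'a \<Rightarrow> bool) \<Rightarrow> bool" where
  "priestley_space T le \<longleftrightarrow>
     compact_space T \<and> partial_order_on_set (topspace T) le \<and>
     (\<forall>x\<in>topspace T. \<forall>y\<in>topspace T. \<not> le y x \<longrightarrow>
        (\<exists>U. openin T U \<and> closedin T U \<and> decreasing_set (topspace T) le U \<and> x \<in> U \<and> y \<notin> U))"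

definition pm_space :: "'a topology \<Rightarrow> ('a \<Rightarrow> 'a \<Rightarrow> bool) \<Rightarrow> ('a \<Rightarrow> 'a) \<Rightarrow> bool" where
  "pm_space T le \<zeta> \<longleftrightarrow>
     priestley_space T le \<and>
     (\<forall>X. openin T X \<and> closedin T X \<and> decreasing_set (topspace T) le X \<longrightarrow>
          openin T (up_closure (topspace T) le X) \<and> closedin T (up_closure (topspace T) le X)) \<and>
     continuous_map T T \<zeta> \<and>
     (\<forall>x\<in>topspace T. \<forall>y\<in>topspace T. le x y \<longrightarrow> le (\<zeta> y) (\<zeta> x)) \<and>
     (\<forall>x\<in>topspace T. \<zeta> (\<zeta> x) = x)"

definition chain_in :: "'a set \<Rightarrow> ('a \<Rightarrow> 'a \<Rightarrow> bool) \<Rightarrow> 'a set \<Rightarrow> bool" where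
  "chain_in P le C \<longleftrightarrow> C \<subseteq> P \<and> (\<forall>a\<in>C. \<forall>b\<in>C. le a b \<or> le b a)"

definition has_height :: "'a set \<Rightarrow> ('a \<Rightarrow> 'a \<Rightarrow> bool) \<Rightarrow> nat \<Rightarrow> bool" where
  "has_height P le n \<longleftrightarrow>
     (\<exists>C. finite C \<and> chain_in P le C \<and> card C = n + 1) \<and>
     (\<forall>C. finite C \<and> chain_in P le C \<longrightarrow> card C \<le> n + 1)"

text \<open>The space Q_6(I,S): carrier bool \<times> 'a, (False,s) is s and (True,s) is its copy \<zeta>(s).\<close>
definition Q6_top :: "'a topology \<Rightarrow> (bool \<times> 'a) topology" where
  "Q6_top S = sum_topology (\<lambda>_. S) UNIV"

definition Q6_le :: "'a set \<Rightarrow> bool \<times> 'a \<Rightarrow> bool \<times> 'a \<Rightarrow> bool" where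
  "Q6_le I p q \<longleftrightarrow> p = q \<or>
     (fst p = False \<and> fst q = True \<and> (snd p \<noteq> snd q \<or> snd p \<notin> I))"

definition Q6_zeta :: "bool \<times> 'a \<Rightarrow> bool \<times> 'a" where
  "Q6_zeta p = (\<not> fst p, snd p)"

end

theory Submission
  imports Defs
begin

lemma Q6_top_space: "topspace (Q6_top S) = UNIV \<times> topspace S"
  by (simp add: Q6_top_def)

lemma Q6_clopen:
  assumes "\<And>b. openin S (F b)" "\<And>b. closedin S (F b)"
  shows "openin (Q6_top S) (Sigma UNIV F) \<and> closedin (Q6_top S) (Sigma UNIV F)"
  using assms by (simp add: Q6_top_def openin_disjoint_union closedin_disjoint_union)

lemma stone_sep:
  assumes "stone_space S" "s \<in> topspace S" "t \<in> topspace S" "s \<noteq> t"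
  shows "\<exists>V. openin S V \<and> closedin S V \<and> s \<in> V \<and> t \<notin> V"
proof -
  have q: "quasi_component_of S s = connected_component_of S s"
    using assms(1) by (intro quasi_eq_connected_component_of) (simp add: stone_space_def)
  have "connected_component_of_set S s = {s}" using assms(1,2) by (simp add: stone_space_def)
  hence "\<not> connected_component_of S s t" using assms(4) by auto
  hence "\<not> quasi_component_of S s t" using q by simp
  then obtain T where T: "closedin S T" "openin S T" "\<not> (s \<in> T \<longleftrightarrow> t \<in> T)"
    using assms(2,3) unfolding quasi_component_of_def by blast
  show ?thesis
  proof (cases "s \<in> T")
    case True thus ?thesis using T by blast
  next
    case False
    thus ?thesis using T assms(2,3)
      by (intro exI[of _ "topspace S - T"]) (auto simp: openin_diff closedin_diff)
  qed
qed

lemma clopen_singleton: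
  assumes "stone_space S" "x \<in> I" "I \<subseteq> topspace S" "\<forall>x\<in>I. openin S {x}"
  shows "openin S {x} \<and> closedin S {x}"
proof -
  have "Hausdorff_space S" using assms(1) by (simp add: stone_space_def)
  hence "t1_space S" by (simp add: Hausdorff_imp_t1_space)
  thus ?thesis using assms by (auto simp: t1_space_closedin_singleton)
qed

lemma Q6_po: "partial_order_on_set P (Q6_le I)"
  unfolding partial_order_on_set_def
proof (intro conjI ballI impI)
  fix x y z assume "Q6_le I x y \<and> Q6_le I y z"
  thus "Q6_le I x z" unfolding Q6_le_def by (cases x, cases y, cases z) auto
next
  fix x y assume "Q6_le I x y \<and> Q6_le I y x"
  thus "x = y" unfolding Q6_le_def by (cases x, cases y) auto
qed (simp add: Q6_le_def)

lemma Q6_priestley: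
  assumes st: "stone_space S" and IS: "I \<subseteq> topspace S" and Io: "\<forall>x\<in>I. openin S {x}"
  shows "priestley_space (Q6_top S) (Q6_le I)"
  unfolding priestley_space_def
proof (intro conjI ballI impI)
  show "compact_space (Q6_top S)"
  proof -
    have c: "compact_space S" using st by (simp add: stone_space_def)
    have "compactin (Q6_top S) ((\<lambda>x. (b,x)) ` topspace S)" for b
      using image_compactin[OF c[unfolded compact_space_def]
        continuous_map_component_injection[of b UNIV "\<lambda>_. S"]]
      by (simp add: Q6_top_def)
    hence "compactin (Q6_top S) ((\<lambda>x. (True,x)) ` topspace S \<union> (\<lambda>x. (False,x)) ` topspace S)"
      by (simp add: compactin_Un)
    moreover have "(\<lambda>x. (True,x)) ` topspace S \<union> (\<lambda>x. (False,x)) ` topspace S = topspace (Q6_top S)"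
      by (auto simp: Q6_top_space)
    ultimately show ?thesis by (simp add: compact_space_def)
  qed
  show "partial_order_on_set (topspace (Q6_top S)) (Q6_le I)" by (rule Q6_po)
next
  fix x y assume x: "x \<in> topspace (Q6_top S)" and y: "y \<in> topspace (Q6_top S)"
    and nle: "\<not> Q6_le I y x"
  obtain bx s where xe: "x = (bx, s)" by (cases x)
  obtain by' t where ye: "y = (by', t)" by (cases y)
  have s: "s \<in> topspace S" and t: "t \<in> topspace S" using x y xe ye by (auto simp: Q6_top_space)
  let ?T = "topspace S"
  have good: "\<exists>U. openin (Q6_top S) U \<and> closedin (Q6_top S) U \<and> decreasing_set (topspace (Q6_top S)) (Q6_le I) U \<and> x \<in> U \<and> y \<notin> U"
    if "\<And>b. openin S (F b)" "\<And>b. closedin S (F b)" "\<And>b. F b \<subseteq> ?T"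
      "\<And>u v. u \<in> F True \<Longrightarrow> v \<in> ?T \<Longrightarrow> v \<noteq> u \<or> v \<notin> I \<Longrightarrow> v \<in> F False"
      "s \<in> F bx" "t \<notin> F by'" for F
  proof (rule exI[of _ "Sigma UNIV F"], intro conjI)
    show "openin (Q6_top S) (Sigma UNIV F)" "closedin (Q6_top S) (Sigma UNIV F)"
      using Q6_clopen[of S F] that(1,2) by auto
    show "x \<in> Sigma UNIV F" "y \<notin> Sigma UNIV F" using that(5,6) xe ye by auto
    show "decreasing_set (topspace (Q6_top S)) (Q6_le I) (Sigma UNIV F)"
      unfolding decreasing_set_def Q6_top_space
    proof (intro conjI ballI impI)
      show "Sigma UNIV F \<subseteq> UNIV \<times> ?T" using that(3) by auto
    next
      fix a b assume a: "a \<in> Sigma UNIV F" and b: "b \<in> UNIV \<times> ?T" and l: "Q6_le I b a"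
      show "b \<in> Sigma UNIV F"
      proof (cases "b = a")
        case True thus ?thesis using a by simp
      next
        case False
        then have "fst b = False" "fst a = True" "snd b \<noteq> snd a \<or> snd b \<notin> I"
          using l by (auto simp: Q6_le_def)
        moreover have "snd a \<in> F True" using a \<open>fst a = True\<close> by (cases a) auto
        ultimately have "snd b \<in> F False" using that(4) b by (metis mem_Times_iff)
        thus ?thesis using \<open>fst b = False\<close> by (cases b) auto
      qed
    qed
  qed
  show "\<exists>U. openin (Q6_top S) U \<and> closedin (Q6_top S) U \<and> decreasing_set (topspace (Q6_top S)) (Q6_le I) U \<and> x \<in> U \<and> y \<notin> U"
  proof (cases bx)
    case True
    show ?thesis
    proof (cases by')
      case True
      with \<open>bx\<close> nle xe ye have "s \<noteq> t" by (auto simp: Q6_le_def)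
      then obtain V where V: "openin S V" "closedin S V" "s \<in> V" "t \<notin> V"
        using stone_sep[OF st s t] by blast
      show ?thesis
        apply (rule good[of "\<lambda>b. if b then V else ?T"])
        using V \<open>bx\<close> True by (auto dest: closedin_subset)
    next
      case False
      with \<open>bx\<close> nle xe ye have "t = s" "s \<in> I" by (auto simp: Q6_le_def)
      then have so: "openin S {s}" "closedin S {s}" using clopen_singleton[OF st _ IS Io] by auto
      show ?thesis
        apply (rule good[of "\<lambda>b. if b then {s} else ?T - {s}"])
        using so \<open>bx\<close> False \<open>t = s\<close> \<open>s \<in> I\<close> s by (auto simp: openin_diff closedin_diff)
    qed
  next
    case False
    show ?thesis
    proof (cases by')
      case True
      show ?thesis
        apply (rule good[of "\<lambda>b. if b then {} else ?T"])
        using False True s by auto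
    next
      case byF: False
      with False nle xe ye have "s \<noteq> t" by (auto simp: Q6_le_def)
      then obtain V where V: "openin S V" "closedin S V" "s \<in> V" "t \<notin> V"
        using stone_sep[OF st s t] by blast
      show ?thesis
        apply (rule good[of "\<lambda>b. if b then {} else V"])
        using V False byF by (auto dest: closedin_subset)
    qed
  qed
qed

lemma Q6_up:
  assumes st: "stone_space S" and IS: "I \<subseteq> topspace S" and Io: "\<forall>x\<in>I. openin S {x}"
    and Xo: "openin (Q6_top S) X" and Xc: "closedin (Q6_top S) X"
    and Xd: "decreasing_set (topspace (Q6_top S)) (Q6_le I) X"
  shows "openin (Q6_top S) (up_closure (topspace (Q6_top S)) (Q6_le I) X) \<and>
         closedin (Q6_top S) (up_closure (topspace (Q6_top S)) (Q6_le I) X)"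
proof -
  let ?T = "topspace S"
  define A where "A = {x. (False,x) \<in> X}"
  define B where "B = {x. (True,x) \<in> X}"
  define C where "C = {t\<in>?T. \<exists>s\<in>A. s \<noteq> t \<or> s \<notin> I}"
  have XS: "X \<subseteq> UNIV \<times> ?T" using Xo openin_subset Q6_top_space by metis
  have Ao: "openin S A" "closedin S A" and Bo: "openin S B" "closedin S B"
    using Xo Xc unfolding A_def B_def by (auto simp: Q6_top_def openin_sum_topology closedin_sum_topology)
  have AT: "A \<subseteq> ?T" using XS A_def by auto
  have Co: "openin S C \<and> closedin S C"
  proof (cases "A = {}")
    case True
    then have "C = {}" by (simp add: C_def)
    thus ?thesis by simp
  next
    case False
    then obtain s where sA: "s \<in> A" by blast
    show ?thesis
    proof (cases "C = ?T")
      case True thus ?thesis by simp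
    next
      case False
      then obtain t where t: "t \<in> ?T" "t \<notin> C" using C_def by auto
      hence "\<forall>u\<in>A. u = t \<and> u \<in> I" by (auto simp: C_def)
      hence eqA: "\<forall>u\<in>A. u = t \<and> u \<in> I" .
      have "s = t" "s \<in> I" using eqA sA by auto
      hence "t \<in> I" by simp
      have "A = {t}"
      proof
        show "A \<subseteq> {t}" using eqA by auto
        show "{t} \<subseteq> A" using sA \<open>s = t\<close> by auto
      qed
      hence "C = ?T - {t}" using C_def \<open>t \<in> I\<close> by auto
      thus ?thesis using clopen_singleton[OF st \<open>t \<in> I\<close> IS Io] by (simp add: openin_diff closedin_diff)
    qed
  qed
  have CT: "C \<subseteq> ?T" by (auto simp: C_def)
  have eq: "up_closure (topspace (Q6_top S)) (Q6_le I) X = Sigma UNIV (\<lambda>b. if b then B \<union> C else A)"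
  proof (rule set_eqI)
    fix p :: "bool \<times> 'a"
    obtain b u where p: "p = (b,u)" by (cases p)
    show "p \<in> up_closure (topspace (Q6_top S)) (Q6_le I) X \<longleftrightarrow> p \<in> Sigma UNIV (\<lambda>b. if b then B \<union> C else A)"
    proof (cases b)
      case False
      hence bF: "b = False" by simp
      have "p \<in> up_closure (topspace (Q6_top S)) (Q6_le I) X \<longleftrightarrow> (False,u) \<in> X"
      proof
        assume "p \<in> up_closure (topspace (Q6_top S)) (Q6_le I) X"
        then obtain x where "x \<in> X" "Q6_le I x (False,u)"
          using False unfolding up_closure_def p by auto
        hence "x = (False,u)" by (auto simp: Q6_le_def)
        thus "(False,u) \<in> X" using \<open>x \<in> X\<close> by simp
      next
        assume "(False,u) \<in> X"
        thus "p \<in> up_closure (topspace (Q6_top S)) (Q6_le I) X"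
          using XS False unfolding up_closure_def p Q6_top_space by (auto simp: Q6_le_def)
      qed
      thus ?thesis by (simp add: p bF A_def)
    next
      case True
      hence bT: "b = True" by simp
      have "p \<in> up_closure (topspace (Q6_top S)) (Q6_le I) X \<longleftrightarrow> u \<in> B \<union> C"
      proof
        assume "p \<in> up_closure (topspace (Q6_top S)) (Q6_le I) X"
        then obtain x where x: "x \<in> X" "Q6_le I x (True,u)" and uT: "u \<in> ?T"
          unfolding up_closure_def p bT Q6_top_space by blast
        obtain c v where xe: "x = (c,v)" by (cases x)
        show "u \<in> B \<union> C"
        proof (cases "x = (True,u)")
          case True thus ?thesis using x B_def by auto
        next
          case False
          hence "c = False" "v \<noteq> u \<or> v \<notin> I" using x(2) xe by (auto simp: Q6_le_def)
          hence "v \<in> A" using x(1) xe A_def by auto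
          thus ?thesis unfolding C_def using uT \<open>v \<noteq> u \<or> v \<notin> I\<close> by blast
        qed
      next
        assume "u \<in> B \<union> C"
        thus "p \<in> up_closure (topspace (Q6_top S)) (Q6_le I) X"
        proof
          assume "u \<in> B"
          thus ?thesis using XS unfolding up_closure_def p bT Q6_top_space B_def
            by (auto simp: Q6_le_def)
        next
          assume "u \<in> C"
          then obtain v where "v \<in> A" "v \<noteq> u \<or> v \<notin> I" "u \<in> ?T" unfolding C_def by blast
          hence "(False,v) \<in> X" "Q6_le I (False,v) (True,u)" by (auto simp: A_def Q6_le_def)
          thus ?thesis unfolding up_closure_def p bT Q6_top_space using \<open>u \<in> ?T\<close> by blast
        qed
      qed
      thus ?thesis by (simp add: p bT)
    qed
  qed
  show ?thesis unfolding eq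
    by (rule Q6_clopen) (use Ao Bo Co in auto)
qed

lemma Q6_height:
  assumes "a \<in> topspace S" "b \<in> topspace S" "a \<noteq> b"
  shows "has_height (topspace (Q6_top S)) (Q6_le I) 1"
  unfolding has_height_def
proof (intro conjI allI impI)
  show "\<exists>C. finite C \<and> chain_in (topspace (Q6_top S)) (Q6_le I) C \<and> card C = 1 + 1"
    apply (rule exI[of _ "{(False,a),(True,b)}"])
    using assms by (auto simp: chain_in_def Q6_top_space Q6_le_def)
next
  fix C :: "(bool \<times> 'a) set" assume h: "finite C \<and> chain_in (topspace (Q6_top S)) (Q6_le I) C"
  have c1: "card (C \<inter> {p. fst p = v}) \<le> 1" for v
  proof -
    have "\<forall>x\<in>C \<inter> {p. fst p = v}. \<forall>y\<in>C \<inter> {p. fst p = v}. x = y"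
      using h by (auto simp: chain_in_def Q6_le_def)
    thus ?thesis using h by (simp add: card_le_Suc0_iff_eq)
  qed
  have "C = (C \<inter> {p. fst p = True}) \<union> (C \<inter> {p. fst p = False})" by auto
  hence "card C \<le> card (C \<inter> {p. fst p = True}) + card (C \<inter> {p. fst p = False})"
    by (metis card_Un_le)
  thus "card C \<le> 1 + 1" using c1[of True] c1[of False] by linarith
qed

theorem theorem4p7:
  fixes S :: "'a topology" and I :: "'a set"
  assumes "stone_space S"
    and "\<exists>a\<in>topspace S. \<exists>b\<in>topspace S. \<exists>c\<in>topspace S. a \<noteq> b \<and> a \<noteq> c \<and> b \<noteq> c"
    and "I \<subseteq> topspace S" and "\<forall>x\<in>I. openin S {x}"
  shows "pm_space (Q6_top S) (Q6_le I) Q6_zeta \<and> has_height (topspace (Q6_top S)) (Q6_le I) 1"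
proof
  show "has_height (topspace (Q6_top S)) (Q6_le I) 1"
    using assms(2) Q6_height by metis
  have cz: "continuous_map (Q6_top S) (Q6_top S) Q6_zeta"
    unfolding continuous_map_def
  proof (intro conjI allI impI)
    show "Q6_zeta \<in> topspace (Q6_top S) \<rightarrow> topspace (Q6_top S)"
      by (auto simp: Q6_top_space Q6_zeta_def)
  next
    fix U assume U: "openin (Q6_top S) U"
    have e: "{x. (b, x) \<in> {x \<in> topspace (Q6_top S). Q6_zeta x \<in> U}} = {x. (\<not> b, x) \<in> U}" for b
      using U openin_subset by (fastforce simp: Q6_top_space Q6_zeta_def)
    have U': "\<forall>i. openin S {x. (i, x) \<in> U}" using U by (simp add: Q6_top_def openin_sum_topology)
    show "openin (Q6_top S) {x \<in> topspace (Q6_top S). Q6_zeta x \<in> U}"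
      unfolding openin_sum_topology Q6_top_def[symmetric]
    proof -
      have "{x \<in> topspace (Q6_top S). Q6_zeta x \<in> U} \<subseteq> Sigma UNIV (topspace \<circ> (\<lambda>_. S))"
        by (auto simp: Q6_top_space)
      moreover have "\<forall>i\<in>UNIV. openin S {x. (i, x) \<in> {x \<in> topspace (Q6_top S). Q6_zeta x \<in> U}}"
        unfolding e using U' by simp
      ultimately show ?thesis unfolding Q6_top_def openin_sum_topology by simp
    qed
  qed
  show "pm_space (Q6_top S) (Q6_le I) Q6_zeta"
    unfolding pm_space_def
    using Q6_priestley[OF assms(1,3,4)] Q6_up[OF assms(1,3,4)] cz
    by (auto simp: Q6_le_def Q6_zeta_def)
qed

end
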